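(* Let $\gamma_n:[0,1]\to\mathbb{R}^d$ be curves in $W^{2,2}([0,1];\mathbb{R}^d)$, each with constant positive speed $|\gamma_n'|$, converging uniformly to a curve $\gamma:[0,1]\to\mathbb{R}^d$, and assume $$\sup_n|\gamma_n'|<+\infty,\qquad \sup_n\int_0^1|\kappa_{\gamma_n}|^2\,ds<+\infty.$$ Then $L(\gamma)=\lim_{n\to\infty}L(\gamma_n)$.
   Context: For a curve $\gamma$, $L(\gamma)$ denotes its length, i.e. its total variation $\sup\sum_j|\gamma(t_j)-\gamma(t_{j-1})|$ over partitions of $[0,1]$. For a constant-speed curve $\gamma_n$ with speed $|\gamma_n'|>0$, its curvature is $\kappa_{\gamma_n}=|\gamma_n'|^{-1}\frac{d}{ds}\big(\frac{\gamma_n'}{|\gamma_n'|}\big)=\gamma_n''/|\gamma_n'|^2$. *)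

theory Defs
  imports "HOL-Analysis.Analysis"
begin

definition curve_length :: "(real \<Rightarrow> 'a::real_normed_vector) \<Rightarrow> ereal" where
  "curve_length g =
     (SUP p \<in> {(m, t). t 0 = (0::real) \<and> t m = 1 \<and> (\<forall>j<m. t j \<le> t (Suc j))}.
        ereal (\<Sum>j<fst p. norm (g (snd p (Suc j)) - g (snd p j))))"

text \<open>g belongs to W^{2,2}([0,1]) (continuous representative), with first derivative g1
  and (weak, a.e.) second derivative g2: g is differentiable on [0,1] with derivative g1,
  g1 is the indefinite integral of g2, and g2 is square integrable.\<close>
definition W22_curve ::
  "(real \<Rightarrow> 'a::euclidean_space) \<Rightarrow> (real \<Rightarrow> 'a) \<Rightarrow> (real \<Rightarrow> 'a) \<Rightarrow> bool" where
  "W22_curve g g1 g2 \<longleftrightarrow>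
     (\<forall>t\<in>{0..1}. (g has_vector_derivative g1 t) (at t within {0..1})) \<and>
     g2 absolutely_integrable_on {0..1} \<and>
     (\<lambda>t. (norm (g2 t))\<^sup>2) integrable_on {0..1} \<and>
     (\<forall>t\<in>{0..1}. g1 t = g1 0 + integral {0..t} g2)"

definition curvature :: "(real \<Rightarrow> 'a::real_normed_vector) \<Rightarrow> (real \<Rightarrow> 'a) \<Rightarrow> real \<Rightarrow> 'a" where
  "curvature g1 g2 t = (1 / (norm (g1 t))\<^sup>2) *\<^sub>R g2 t"

text \<open>Elastic energy \<integral>|kappa|^2 ds with ds = |g'| dt.\<close>
definition elastic_energy :: "(real \<Rightarrow> 'a::real_normed_vector) \<Rightarrow> (real \<Rightarrow> 'a) \<Rightarrow> real" where
  "elastic_energy g1 g2 = integral {0..1} (\<lambda>t. (norm (curvature g1 g2 t))\<^sup>2 * norm (g1 t))"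

end

theory Submission
  imports Defs
begin

lemma amgm_pt:
  fixes x r :: real assumes r: "r > 0" and x: "x \<ge> 0"
  shows "x \<le> (r/2) * x^2 + 1/(2*r)"
proof -
  have "0 \<le> (r*x - 1)^2" by simp
  hence "2*r*x \<le> r^2*x^2 + 1" by (simp add: power2_eq_square algebra_simps)
  thus ?thesis using r by (simp add: field_simps power2_eq_square)
qed

lemma g1_mod:
  assumes W: "W22_curve g g1 g2" and a: "0 \<le> a" "a \<le> s" "s \<le> 1" "s - a \<le> h" "h > 0"
  shows "norm (g1 s - g1 a) \<le> sqrt h * (integral {0..1} (\<lambda>t. (norm (g2 t))\<^sup>2) + 1) / 2"
proof -
  have ai: "g2 absolutely_integrable_on {0..1}" and sq: "(\<lambda>t. (norm (g2 t))\<^sup>2) integrable_on {0..1}"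
    and rep: "\<forall>t\<in>{0..1}. g1 t = g1 0 + integral {0..t} g2"
    using W unfolding W22_curve_def by blast+
  have i2: "g2 integrable_on {0..1}" and in2: "(\<lambda>t. norm (g2 t)) integrable_on {0..1}"
    using ai by (auto simp: absolutely_integrable_on_def)
  have i2s: "g2 integrable_on {0..s}" by (rule integrable_subinterval_real[OF i2]) (use a in auto)
  have "integral {0..s} g2 = integral {0..a} g2 + integral {a..s} g2"
    by (rule Henstock_Kurzweil_Integration.integral_combine[symmetric]) (use a i2s in auto)
  moreover have "g1 s = g1 0 + integral {0..s} g2" "g1 a = g1 0 + integral {0..a} g2"
    by (rule bspec[OF rep], use a in simp)+
  ultimately have eq: "g1 s - g1 a = integral {a..s} g2" by simp
  have isub: "g2 integrable_on {a..s}" "(\<lambda>t. norm (g2 t)) integrable_on {a..s}"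
    "(\<lambda>t. (norm (g2 t))\<^sup>2) integrable_on {a..s}"
    by (rule integrable_subinterval_real[OF i2] integrable_subinterval_real[OF in2]
         integrable_subinterval_real[OF sq]; use a in auto)+
  define r where "r = sqrt h"
  have r: "r > 0" using a by (simp add: r_def)
  define Q' where "Q' = integral {a..s} (\<lambda>t. (norm (g2 t))\<^sup>2)"
  have hi: "((\<lambda>t. (r/2) * (norm (g2 t))\<^sup>2 + 1/(2*r)) has_integral ((r/2) * Q' + (s-a) * (1/(2*r)))) {a..s}"
    unfolding Q'_def
    using has_integral_add[OF has_integral_mult_right[OF integrable_integral[OF isub(3)], of "r/2"]
        has_integral_const_real[of "1/(2*r)" a s]] a by (simp del: times_divide_eq_left times_divide_eq_right)
  have "norm (g1 s - g1 a) \<le> integral {a..s} (\<lambda>t. norm (g2 t))"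
    unfolding eq by (rule integral_norm_bound_integral[OF isub(1,2)]) auto
  also have "\<dots> \<le> (r/2) * Q' + (s-a) * (1/(2*r))"
  proof -
    have "integral {a..s} (\<lambda>t. norm (g2 t)) \<le> integral {a..s} (\<lambda>t. (r/2) * (norm (g2 t))\<^sup>2 + 1/(2*r))"
      by (rule integral_le[OF isub(2) has_integral_integrable[OF hi]]) (rule amgm_pt[OF r], simp)
    thus ?thesis using integral_unique[OF hi] by simp
  qed
  finally have c1: "norm (g1 s - g1 a) \<le> (r/2) * Q' + (s-a) * (1/(2*r))" .
  have "Q' \<le> integral {0..1} (\<lambda>t. (norm (g2 t))\<^sup>2)"
    unfolding Q'_def by (rule integral_subset_le) (use a isub sq in auto)
  hence c2: "(r/2) * Q' \<le> (r/2) * integral {0..1} (\<lambda>t. (norm (g2 t))\<^sup>2)"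
    using r by (simp add: mult_left_mono)
  have c3: "(s-a) * (1/(2*r)) \<le> r/2"
  proof -
    have "(s-a) * (1/(2*r)) \<le> h * (1/(2*r))" using a r by (simp add: divide_right_mono)
    also have "h = r*r" unfolding r_def using a by simp
    finally show ?thesis using r by simp
  qed
  have c4: "r * (integral {0..1} (\<lambda>t. (norm (g2 t))\<^sup>2) + 1) / 2
      = (r/2) * integral {0..1} (\<lambda>t. (norm (g2 t))\<^sup>2) + r/2"
    by (simp add: algebra_simps)
  show ?thesis unfolding r_def[symmetric] using c1 c2 c3 c4 by linarith
qed

lemma chord_int:
  assumes W: "W22_curve g g1 g2" and a: "0 \<le> a" "a \<le> b" "b \<le> 1"
  shows "(g1 has_integral (g b - g a)) {a..b}"
proof (rule fundamental_theorem_of_calculus[OF a(2)])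
  fix x assume x: "x \<in> {a..b}"
  have "(g has_vector_derivative g1 x) (at x within {0..1})"
  proof -
    have "x \<in> {0..1}" using x a by auto
    thus ?thesis using W unfolding W22_curve_def by blast
  qed
  thus "(g has_vector_derivative g1 x) (at x within {a..b})"
    by (rule has_vector_derivative_within_subset) (use a in auto)
qed

lemma chord_upper:
  assumes W: "W22_curve g g1 g2" and sp: "\<And>t. t \<in> {0..1} \<Longrightarrow> norm (g1 t) = c"
    and c: "c \<ge> 0" and a: "0 \<le> a" "a \<le> b" "b \<le> 1"
  shows "norm (g b - g a) \<le> c * (b - a)"
  using has_integral_bound[OF c chord_int[OF W a, unfolded box_real(2)[symmetric]]] sp a
  by (auto simp: mult.commute)

lemma chord_lower:
  assumes W: "W22_curve g g1 g2" and sp: "\<And>t. t \<in> {0..1} \<Longrightarrow> norm (g1 t) = c"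
    and a: "0 \<le> a" "a \<le> b" "b \<le> 1" "b - a \<le> h" "h > 0"
  shows "(b - a) * c - (b - a) * (sqrt h * (integral {0..1} (\<lambda>t. (norm (g2 t))\<^sup>2) + 1) / 2)
     \<le> norm (g b - g a)"
proof -
  define B where "B = sqrt h * (integral {0..1} (\<lambda>t. (norm (g2 t))\<^sup>2) + 1) / 2"
  have B0: "B \<ge> 0"
  proof -
    have "norm (g1 a - g1 a) \<le> B" unfolding B_def by (rule g1_mod[OF W]) (use a in auto)
    thus ?thesis by simp
  qed
  have hi: "((\<lambda>s. g1 s - g1 a) has_integral ((g b - g a) - (b - a) *\<^sub>R g1 a)) {a..b}"
    using has_integral_diff[OF chord_int[OF W a(1-3)] has_integral_const_real[of "g1 a" a b]] a
    by simp
  have bd: "\<And>x. x \<in> cbox a b \<Longrightarrow> norm (g1 x - g1 a) \<le> B"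
    unfolding B_def by (rule g1_mod[OF W]) (use a in auto)
  have "norm ((g b - g a) - (b - a) *\<^sub>R g1 a) \<le> (b - a) * B"
    using has_integral_bound[OF B0 hi[unfolded box_real(2)[symmetric]] bd] a by (simp add: mult.commute)
  moreover have "norm ((b - a) *\<^sub>R g1 a) = (b - a) * c" using sp a by simp
  moreover have "norm ((b - a) *\<^sub>R g1 a) \<le> norm (g b - g a) + norm ((g b - g a) - (b - a) *\<^sub>R g1 a)"
    using norm_triangle_ineq4[of "g b - g a" "(g b - g a) - (b - a) *\<^sub>R g1 a"] by simp
  ultimately show ?thesis unfolding B_def by linarith
qed

lemma chain_mono:
  fixes t :: "nat \<Rightarrow> real"
  assumes "\<forall>j<m. t j \<le> t (Suc j)" "i \<le> j" "j \<le> m"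
  shows "t i \<le> t j"
  using assms(2,3)
proof (induction j)
  case 0 thus ?case by simp
next
  case (Suc j)
  show ?case
  proof (cases "i = Suc j")
    case False
    hence "t i \<le> t j" using Suc by simp
    also have "t j \<le> t (Suc j)" using assms(1) Suc by simp
    finally show ?thesis .
  qed simp
qed

lemma sum_upper:
  assumes W: "W22_curve g g1 g2" and sp: "\<And>t. t \<in> {0..1} \<Longrightarrow> norm (g1 t) = c"
    and c: "c \<ge> 0" and t: "t 0 = 0" "t m = 1" "\<forall>j<m. t j \<le> t (Suc j)"
  shows "(\<Sum>j<m. norm (g (t (Suc j)) - g (t j))) \<le> c"
proof -
  have r: "0 \<le> t j" "t j \<le> 1" if "j \<le> m" for j
    using chain_mono[OF t(3), of 0 j] chain_mono[OF t(3), of j m] that t by auto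
  have "(\<Sum>j<m. norm (g (t (Suc j)) - g (t j))) \<le> (\<Sum>j<m. c * (t (Suc j) - t j))"
    by (rule sum_mono, rule chord_upper[OF W sp c]) (use r t(3) in auto)
  also have "\<dots> = c * (t m - t 0)"
    by (simp add: sum_distrib_left[symmetric] sum_lessThan_telescope)
  finally show ?thesis using t by simp
qed

lemma sum_lower:
  assumes W: "W22_curve g g1 g2" and sp: "\<And>t. t \<in> {0..1} \<Longrightarrow> norm (g1 t) = c"
    and m: "m > 0"
  shows "c - sqrt (1 / real m) * (integral {0..1} (\<lambda>t. (norm (g2 t))\<^sup>2) + 1) / 2
     \<le> (\<Sum>j<m. norm (g (real (Suc j) / real m) - g (real j / real m)))"
proof -
  define B where "B = sqrt (1 / real m) * (integral {0..1} (\<lambda>t. (norm (g2 t))\<^sup>2) + 1) / 2"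
  have "(\<Sum>j<m. (1 / real m) * c - (1 / real m) * B) \<le> (\<Sum>j<m. norm (g (real (Suc j) / real m) - g (real j / real m)))"
  proof (rule sum_mono)
    fix j assume j: "j \<in> {..<m}"
    have e: "real (Suc j) / real m - real j / real m = 1 / real m" using m by (simp add: field_simps)
    have "real (Suc j) / real m \<le> 1" using j m by simp
    thus "(1 / real m) * c - (1 / real m) * B \<le> norm (g (real (Suc j) / real m) - g (real j / real m))"
      using chord_lower[OF W sp, of "real j / real m" "real (Suc j) / real m" "1 / real m"] m
      unfolding B_def e by (simp add: divide_right_mono)
  qed
  also have "(\<Sum>j<m. (1 / real m) * c - (1 / real m) * B) = c - B" using m by (simp add: field_simps)
  finally show ?thesis unfolding B_def .
qed

lemma energy_eq:
  assumes sp: "\<And>t. t \<in> {0..1} \<Longrightarrow> norm (g1 t) = c" and c: "c > 0"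
  shows "integral {0..1} (\<lambda>t. (norm (g2 t))\<^sup>2) = c^3 * elastic_energy g1 g2"
proof -
  have "elastic_energy g1 g2 = integral {0..1} (\<lambda>t. (norm (g2 t))\<^sup>2 / c^3)"
    unfolding elastic_energy_def curvature_def
    by (rule integral_cong) (use sp c in \<open>auto simp: power2_eq_square power3_eq_cube field_simps\<close>)
  also have "\<dots> = integral {0..1} (\<lambda>t. (norm (g2 t))\<^sup>2) / c^3"
    by simp
  finally show ?thesis using c by simp
qed

lemma sqrt_lim: "((\<lambda>m. sqrt (1 / real m) * K) \<longlongrightarrow> 0) sequentially"
proof -
  have "((\<lambda>m. sqrt (1 / real m)) \<longlongrightarrow> sqrt 0) sequentially"
    by (rule tendsto_real_sqrt[OF lim_1_over_n])
  thus ?thesis using tendsto_mult_left_zero by force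
qed

theorem lemma2p2:
  fixes \<gamma>s :: "nat \<Rightarrow> real \<Rightarrow> real ^ 'd"
    and \<gamma>1 \<gamma>2 :: "nat \<Rightarrow> real \<Rightarrow> real ^ 'd"
    and \<gamma> :: "real \<Rightarrow> real ^ 'd"
    and c :: "nat \<Rightarrow> real"
  assumes W22: "\<And>n. W22_curve (\<gamma>s n) (\<gamma>1 n) (\<gamma>2 n)"
    and speed: "\<And>n t. t \<in> {0..1} \<Longrightarrow> norm (\<gamma>1 n t) = c n"
    and speed_pos: "\<And>n. c n > 0"
    and unif: "uniform_limit {0..1} \<gamma>s \<gamma> sequentially"
    and speed_bdd: "\<exists>M. \<forall>n. c n \<le> M"
    and energy_bdd: "\<exists>E. \<forall>n. elastic_energy (\<gamma>1 n) (\<gamma>2 n) \<le> E"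
  shows "(\<lambda>n. curve_length (\<gamma>s n)) \<longlonglongrightarrow> curve_length \<gamma>"
proof -
  obtain M where M: "\<And>n. c n \<le> M" using speed_bdd by blast
  obtain E where E: "\<And>n. elastic_energy (\<gamma>1 n) (\<gamma>2 n) \<le> E" using energy_bdd by blast
  define Q where "Q n = integral {0..1} (\<lambda>t. (norm (\<gamma>2 n t))\<^sup>2)" for n
  have Qeq: "Q n = c n ^ 3 * elastic_energy (\<gamma>1 n) (\<gamma>2 n)" for n
    unfolding Q_def by (rule energy_eq[OF speed speed_pos])
  have Qnn: "Q n \<ge> 0" for n
  proof -
    have "(\<lambda>t. (norm (\<gamma>2 n t))\<^sup>2) integrable_on {0..1}" using W22[of n] unfolding W22_curve_def by blast
    thus ?thesis unfolding Q_def by (rule integral_nonneg) simp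
  qed
  have E0: "E \<ge> 0"
  proof -
    have "0 \<le> elastic_energy (\<gamma>1 0) (\<gamma>2 0)"
      using Qnn[of 0] Qeq[of 0] speed_pos[of 0] by (simp add: zero_le_mult_iff)
    thus ?thesis using E[of 0] by linarith
  qed
  have M0: "M > 0" using M[of 0] speed_pos[of 0] by linarith
  have QB: "Q n \<le> E * M^3" for n
  proof -
    have "Q n \<le> c n ^ 3 * E" unfolding Qeq using E[of n] speed_pos[of n] by (simp add: mult_left_mono)
    also have "\<dots> \<le> M^3 * E"
      by (rule mult_right_mono[OF power_mono[OF M]]) (use speed_pos[of n] E0 in auto)
    finally show ?thesis by (simp add: mult.commute)
  qed
  define K where "K = (E * M^3 + 1) / 2"
  define P where "P = {(m, t). t 0 = (0::real) \<and> t m = 1 \<and> (\<forall>j<m. t j \<le> t (Suc j))}"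
  define S where "S g p = (\<Sum>j<fst p. norm (g (snd p (Suc j)) - g (snd p j)))" for g :: "real \<Rightarrow> real ^ 'd" and p :: "nat \<times> (nat \<Rightarrow> real)"
  have CL: "curve_length g = (SUP p\<in>P. ereal (S g p))" for g
    unfolding curve_length_def P_def S_def ..
  define pm where "pm m = (m, \<lambda>j. real j / real m)" for m :: nat
  have pmP: "pm m \<in> P" if "m > 0" for m
    using that unfolding pm_def P_def by (auto simp: divide_right_mono)
  have low: "c n - sqrt (1 / real m) * K \<le> S (\<gamma>s n) (pm m)" if "m > 0" for n m
  proof -
    have "sqrt (1 / real m) * (Q n + 1) / 2 \<le> sqrt (1 / real m) * K"
      unfolding K_def using QB[of n] by (simp add: mult_left_mono)
    thus ?thesis using sum_lower[OF W22 speed that, of n] unfolding S_def pm_def Q_def by simp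
  qed
  have up: "S (\<gamma>s n) p \<le> c n" if "p \<in> P" for n p
    using that sum_upper[OF W22 speed, of n] speed_pos[of n] unfolding P_def S_def
    by (auto simp: less_imp_le)
  have conv: "(\<lambda>n. S (\<gamma>s n) p) \<longlonglongrightarrow> S \<gamma> p" if "p \<in> P" for p
  proof -
    obtain m t where p0: "p = (m, t)" by (cases p)
    hence p: "p = (m, t)" "t 0 = 0" "t m = 1" "\<forall>j<m. t j \<le> t (Suc j)"
      using that unfolding P_def by auto
    have r: "t j \<in> {0..1}" if "j \<le> m" for j
      using chain_mono[OF p(4), of 0 j] chain_mono[OF p(4), of j m] that p by auto
    have pt: "(\<lambda>n. \<gamma>s n (t j)) \<longlonglongrightarrow> \<gamma> (t j)" if "j \<le> m" for j
      by (rule tendsto_uniform_limitI[OF unif r[OF that]])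
    show ?thesis unfolding S_def p fst_conv snd_conv
      by (intro tendsto_intros pt) auto
  qed
  have clN: "curve_length (\<gamma>s n) = ereal (c n)" for n
  proof (rule antisym)
    show "curve_length (\<gamma>s n) \<le> ereal (c n)" unfolding CL
      by (rule SUP_least) (use up in auto)
  next
    have lim: "(\<lambda>m. ereal (c n - sqrt (1 / real m) * K)) \<longlonglongrightarrow> ereal (c n)"
      using tendsto_diff[OF tendsto_const[of "c n"] sqrt_lim[of K]] by (simp add: tendsto_ereal)
    show "ereal (c n) \<le> curve_length (\<gamma>s n)"
    proof (rule tendsto_le[OF _ tendsto_const lim])
      show "\<forall>\<^sub>F m in sequentially. ereal (c n - sqrt (1 / real m) * K) \<le> curve_length (\<gamma>s n)"
        unfolding eventually_sequentially CL
      proof (intro exI[of _ 1] allI impI)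
        fix m :: nat assume "1 \<le> m"
        hence m: "m > 0" by simp
        have "ereal (c n - sqrt (1 / real m) * K) \<le> ereal (S (\<gamma>s n) (pm m))" using low[OF m] by simp
        also have "\<dots> \<le> (SUP p\<in>P. ereal (S (\<gamma>s n) p))" by (rule SUP_upper[OF pmP[OF m]])
        finally show "ereal (c n - sqrt (1 / real m) * K) \<le> (SUP p\<in>P. ereal (S (\<gamma>s n) p))" .
      qed
    qed simp
  qed
  have SgM: "S \<gamma> p \<le> M" if "p \<in> P" for p
    by (rule LIMSEQ_le_const2[OF conv[OF that]]) (use up[OF that] M order_trans in blast)
  have L_up: "curve_length \<gamma> \<le> ereal M" unfolding CL
    by (rule SUP_least) (use SgM in auto)
  have L_low: "ereal (S \<gamma> (pm 1)) \<le> curve_length \<gamma>" unfolding CL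
    by (rule SUP_upper[OF pmP]) simp
  obtain l where l: "curve_length \<gamma> = ereal l"
    using L_up L_low by (cases "curve_length \<gamma>") auto
  have "c \<longlonglongrightarrow> l"
  proof (rule tendstoI)
    fix e :: real assume e: "e > 0"
    have "ereal (l - e/2) < (SUP p\<in>P. ereal (S \<gamma> p))" using e l CL[of \<gamma>] by simp
    then obtain p where p: "p \<in> P" "l - e/2 < S \<gamma> p" by (auto simp: less_SUP_iff)
    have ev1: "\<forall>\<^sub>F n in sequentially. l - e < c n"
    proof -
      have "\<forall>\<^sub>F n in sequentially. l - e < S (\<gamma>s n) p"
        using order_tendstoD(1)[OF conv[OF p(1)], of "l - e"] p(2) e by simp
      thus ?thesis by (rule eventually_mono) (use up[OF p(1)] order_less_le_trans in blast)
    qed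
    obtain N where N: "\<And>m. m \<ge> N \<Longrightarrow> sqrt (1 / real m) * K < e/2"
      using order_tendstoD(2)[OF sqrt_lim[of K], of "e/2"] e by (auto simp: eventually_sequentially)
    define m where "m = Suc N"
    have m: "m > 0" "sqrt (1 / real m) * K < e/2" using N[of m] by (auto simp: m_def)
    have "ereal (S \<gamma> (pm m)) \<le> curve_length \<gamma>" unfolding CL by (rule SUP_upper[OF pmP[OF m(1)]])
    hence Sl: "S \<gamma> (pm m) \<le> l" using l by simp
    have ev2: "\<forall>\<^sub>F n in sequentially. c n < l + e"
    proof -
      have "\<forall>\<^sub>F n in sequentially. S (\<gamma>s n) (pm m) < l + e/2"
        using order_tendstoD(2)[OF conv[OF pmP[OF m(1)]], of "l + e/2"] Sl e by simp
      thus ?thesis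
      proof (rule eventually_mono)
        fix n assume "S (\<gamma>s n) (pm m) < l + e / 2"
        thus "c n < l + e" using low[OF m(1), of n] m(2) by linarith
      qed
    qed
    show "\<forall>\<^sub>F n in sequentially. dist (c n) l < e"
      using eventually_conj[OF ev1 ev2] by (rule eventually_mono) (auto simp: dist_real_def)
  qed
  thus ?thesis unfolding clN l by (simp add: tendsto_ereal)
qed

end
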